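(* There do not exist real numbers $a,b,c$ with $a\neq 0$ such that the quadratic function $f(x)=ax^2+bx+c$ has two distinct fixed points $p_1,p_2\in\mathbb{R}$ with the property that for each $i\in\{1,2\}$ there is $\epsilon_i>0$ such that for every $x^{(0)}$ with $|x^{(0)}-p_i|\le\epsilon_i$, the fixed-point iteration $x^{(t)}=f(x^{(t-1)})$, $t\ge1$, converges to $p_i$.
   Context: A fixed point of $f$ is a point $p$ with $f(p)=p$. *)

theory Defs
  imports Complex_Main
begin

end

theory Submission
  imports Defs
begin

lemma repel:
  fixes a b c p e :: real
  assumes a: "a \<noteq> 0" and fp: "a * p^2 + b * p + c = p" and d: "2*a*p + b \<ge> 1" and e: "e > 0"
  shows "\<not> (\<lambda>t. ((\<lambda>x. a * x^2 + b * x + c) ^^ t) (p + e * sgn a)) \<longlonglongrightarrow> p"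
proof
  define f where "f = (\<lambda>x::real. a * x^2 + b * x + c)"
  define x0 where "x0 = p + e * sgn a"
  assume lim: "(\<lambda>t. ((\<lambda>x. a * x^2 + b * x + c) ^^ t) (p + e * sgn a)) \<longlonglongrightarrow> p"
  hence lim': "(\<lambda>t. (f ^^ t) x0) \<longlonglongrightarrow> p" by (simp add: f_def x0_def)
  have key: "a * ((f ^^ t) x0 - p) \<ge> e * \<bar>a\<bar>" for t
  proof (induction t)
    case 0
    have "a * (x0 - p) = e * (a * sgn a)" by (simp add: x0_def)
    also have "a * sgn a = \<bar>a\<bar>" by (simp add: abs_sgn)
    finally show ?case by simp
  next
    case (Suc t)
    define y where "y = (f ^^ t) x0"
    define u where "u = a * (y - p)"
    have pos: "u > 0" using Suc e a unfolding u_def y_def by (smt (verit) mult_pos_pos zero_less_abs_iff)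
    have "f y - p = (y - p) * (a * (y - p) + (2*a*p + b))"
      using fp unfolding f_def by (simp add: algebra_simps power2_eq_square)
    hence "a * (f y - p) = a * ((y - p) * (a * (y - p) + (2*a*p + b)))" by simp
    also have "\<dots> = u * (u + (2*a*p+b))" unfolding u_def by (simp add: algebra_simps)
    finally have "a * (f y - p) = u * (u + (2*a*p+b))" .
    moreover have "u * (u + (2*a*p+b)) \<ge> u * 1"
      using pos d by (intro mult_left_mono) auto
    ultimately have "a * (f y - p) \<ge> u" by simp
    thus ?case using Suc unfolding u_def y_def by simp
  qed
  have "(\<lambda>t. a * ((f ^^ t) x0 - p)) \<longlonglongrightarrow> a * (p - p)"
    by (intro tendsto_intros lim')
  hence "e * \<bar>a\<bar> \<le> a * (p - p)"
    by (rule LIMSEQ_le_const) (use key in auto)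
  moreover have "e * \<bar>a\<bar> > 0" using a e by simp
  ultimately show False by simp
qed

theorem lemmaA8:
  shows "\<not> (\<exists>a b c :: real. a \<noteq> 0 \<and>
           (let f = (\<lambda>x. a * x^2 + b * x + c) in
             (\<exists>p1 p2 :: real. p1 \<noteq> p2 \<and> f p1 = p1 \<and> f p2 = p2 \<and>
               (\<forall>p \<in> {p1, p2}. \<exists>\<epsilon> > 0. \<forall>x0. \<bar>x0 - p\<bar> \<le> \<epsilon> \<longrightarrow>
                   (\<lambda>t. (f ^^ t) x0) \<longlonglongrightarrow> p))))"
proof
  assume "\<exists>a b c :: real. a \<noteq> 0 \<and>
           (let f = (\<lambda>x. a * x^2 + b * x + c) in
             (\<exists>p1 p2 :: real. p1 \<noteq> p2 \<and> f p1 = p1 \<and> f p2 = p2 \<and>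
               (\<forall>p \<in> {p1, p2}. \<exists>\<epsilon> > 0. \<forall>x0. \<bar>x0 - p\<bar> \<le> \<epsilon> \<longrightarrow>
                   (\<lambda>t. (f ^^ t) x0) \<longlonglongrightarrow> p)))"
  then obtain a b c p1 p2 :: real where a: "a \<noteq> 0" and ne: "p1 \<noteq> p2"
    and f1: "a * p1^2 + b * p1 + c = p1" and f2: "a * p2^2 + b * p2 + c = p2"
    and att: "\<forall>p \<in> {p1, p2}. \<exists>\<epsilon> > 0. \<forall>x0. \<bar>x0 - p\<bar> \<le> \<epsilon> \<longrightarrow>
                   (\<lambda>t. ((\<lambda>x. a * x^2 + b * x + c) ^^ t) x0) \<longlonglongrightarrow> p"
    unfolding Let_def by (simp only: ball_simps) blast
  have "(p1 - p2) * (a * (p1 + p2) + b - 1) = 0"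
    using f1 f2 by (simp add: algebra_simps power2_eq_square)
  hence s: "a * (p1 + p2) + b - 1 = 0" using ne by simp
  obtain p where p: "p \<in> {p1, p2}" and d: "2*a*p + b \<ge> 1"
  proof (cases "2*a*p1 + b \<ge> 1")
    case True thus ?thesis using that by blast
  next
    case False
    hence "2*a*p2 + b \<ge> 1" using s by (simp add: algebra_simps)
    thus ?thesis using that by blast
  qed
  have fp: "a * p^2 + b * p + c = p" using p f1 f2 by auto
  obtain e where e: "e > 0" and h: "\<forall>x0. \<bar>x0 - p\<bar> \<le> e \<longrightarrow>
                   (\<lambda>t. ((\<lambda>x. a * x^2 + b * x + c) ^^ t) x0) \<longlonglongrightarrow> p"
    using att p by blast
  have "\<bar>(p + e * sgn a) - p\<bar> \<le> e" using e a by (simp add: abs_mult abs_sgn_eq)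
  with h have "(\<lambda>t. ((\<lambda>x. a * x^2 + b * x + c) ^^ t) (p + e * sgn a)) \<longlonglongrightarrow> p" by blast
  with repel[OF a fp d e] show False by blast
qed

end
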